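(* Let $\alpha \in (0,1)$ and let $O_1, \dots, O_n$ be i.i.d. copies of $O = (X, Y)$ drawn from a law $P_0$ on $\mathcal{X} \times \mathbb{R}$, such that (i) for $P_{0,X}$-almost all $x \in \mathcal{X}$ the conditional $\alpha$-quantile $\psi^\alpha_{P_0}(x) := \{ y \in \mathbb{R} : P_0(Y < y \mid X = x) \ge \alpha,\ P_0(Y \ge y \mid X = x) \ge 1-\alpha \}$ is a singleton (so $\psi^\alpha_{P_0}$ is viewed as a function $\mathcal{X} \to \mathbb{R}$), and (ii) $|Y| \le C_0 < \infty$ holds $P_0$-almost surely. Let $\widehat{\psi}^\alpha_1, \dots, \widehat{\psi}^\alpha_K$ be algorithms (as defined in the context), with $K = O(n^a)$ for some $a > 0$, and assume that for every $k \in \{1,\dots,K\}$, $\widehat{\psi}^\alpha_k$ only outputs functions uniformly bounded by $C_0$. Let $\widehat{\kappa}_n$ be the discrete Super Learner selector and $\widetilde{\kappa}_n$ the oracle selector, and let $\widetilde{\psi}^\alpha_{P_0}$ denote the algorithm that always outputs $\psi^\alpha_{P_0}$. Then $$\mathbb{E}_{P_0}\Big[\widetilde{R}^\alpha_{n,P_0}(\widehat{\psi}^\alpha_{\widehat{\kappa}_n}) - \widetilde{R}^\alpha_{n,P_0}(\widetilde{\psi}^\alpha_{P_0})\Big] \le \mathbb{E}_{P_0}\Big[\widetilde{R}^\alpha_{n,P_0}(\widehat{\psi}^\alpha_{\widetilde{\kappa}_n}) - \widetilde{R}^\alpha_{n,P_0}(\widetilde{\psi}^\alpha_{P_0})\Big]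 + O\!\left(\frac{\log n}{n^{1/2}}\right).$$
   Context: Let $\Psi$ be the set of measurable functions $\mathcal{X} \to \mathbb{R}$. The quantile (pinball) loss of $\psi \in \Psi$ is $L^\alpha(\psi)(x,y) := \alpha|y - \psi(x)|$ if $y > \psi(x)$ and $(1-\alpha)|y-\psi(x)|$ if $y \le \psi(x)$. For a probability measure $P$ and a function $f$, write $Pf := \int f\, dP$. An algorithm is a map sending any finite set $\{o_1,\dots,o_M\} \subset \mathcal{X}\times\mathbb{R}$, viewed as the empirical measure $M^{-1}\sum_{m} \mathrm{Dirac}(o_m)$, to an element of $\Psi$. Cross-validation scheme: $B_n \in \{0,1\}^n$ is a random vector drawn independently of $O_1,\dots,O_n$ with $\sum_{i=1}^n B_n(i) \approx np$ for a fixed user-supplied proportion $p$ (e.g. $V$-fold cross-validation: $B_n$ uniform on $\{b_1,\dots,b_V\}$ with $\sum_i b_v(i) \approx n/V$ and $\sum_v b_v(i) = 1$ for each $i$). Observation $O_i$ is in the training set if $B_n(i)=0$ and in the test set if $B_n(i)=1$; $P^0_{n,B_n}$ and $P^1_{n,B_n}$ denote the empirical distributions of the training and test sets. The oracle cross-validated risk of an algorithm $\widehat{\psi}$ is $\widetilde{R}^\alpha_{n,P_0}(\widehat{\psi}) := \mathbb{E}_{B_n}[P_0 L^\alpha(\widehat{\psi}(P^0_{n,B_n}))]$ (in particular $\widetilde{R}^\alpha_{n,P_0}(\widetilde{\psi}^\alpha_{P_0}) = P_0 L^\alpha(\psi^\alpha_{P_0})$), and its empirical cross-validated risk is $\widehat{R}^\alpha_n(\widehat{\psi})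 := \mathbb{E}_{B_n}[P^1_{n,B_n} L^\alpha(\widehat{\psi}(P^0_{n,B_n}))]$. The discrete Super Learner selector is $\widehat{\kappa}_n \in \arg\min_{k \in \{1,\dots,K\}} \widehat{R}^\alpha_n(\widehat{\psi}^\alpha_k)$ and the oracle selector is $\widetilde{\kappa}_n \in \arg\min_{k \in \{1,\dots,K\}} \widetilde{R}^\alpha_{n,P_0}(\widehat{\psi}^\alpha_k)$. *)

theory Defs
  imports "HOL-Probability.Probability" "HOL-Library.Landau_Symbols" "HOL-Library.Multiset"
begin

definition pinball :: "real \<Rightarrow> ('x \<Rightarrow> real) \<Rightarrow> 'x \<times> real \<Rightarrow> real" where
  "pinball \<alpha> \<psi> = (\<lambda>(x, y). if y > \<psi> x then \<alpha> * \<bar>y - \<psi> x\<bar> else (1 - \<alpha>) * \<bar>y - \<psi> x\<bar>)"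

definition quantile_set :: "real \<Rightarrow> real measure \<Rightarrow> real set" where
  "quantile_set \<alpha> Q = {y. measure Q {..<y} \<ge> \<alpha> \<and> measure Q {y..} \<ge> 1 - \<alpha>}"

text \<open>Training sample (as a multiset, i.e. empirical measure) for test index set S.\<close>
definition train_ms :: "nat \<Rightarrow> (nat \<Rightarrow> 'o) \<Rightarrow> nat set \<Rightarrow> 'o multiset" where
  "train_ms n d S = image_mset d (mset_set ({..<n} - S))"

text \<open>Oracle cross-validated risk of an algorithm on the data d (B is the law of the test set).\<close>
definition oracle_cv_risk ::
  "('x \<times> real) measure \<Rightarrow> real \<Rightarrow> nat set pmf \<Rightarrow> nat
     \<Rightarrow> (('x \<times> real) multiset \<Rightarrow> 'x \<Rightarrow> real) \<Rightarrow> (nat \<Rightarrow> 'x \<times> real) \<Rightarrow> real" where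
  "oracle_cv_risk P0 \<alpha> B n alg d =
     measure_pmf.expectation B (\<lambda>S. \<integral>z. pinball \<alpha> (alg (train_ms n d S)) z \<partial>P0)"

definition emp_cv_risk ::
  "real \<Rightarrow> nat set pmf \<Rightarrow> nat
     \<Rightarrow> (('x \<times> real) multiset \<Rightarrow> 'x \<Rightarrow> real) \<Rightarrow> (nat \<Rightarrow> 'x \<times> real) \<Rightarrow> real" where
  "emp_cv_risk \<alpha> B n alg d =
     measure_pmf.expectation B
       (\<lambda>S. (\<Sum>i\<in>S. pinball \<alpha> (alg (train_ms n d S)) (d i)) / real (card S))"

end

theory Submission imports Defs begin

lemma indep_components:
  fixes P0 :: "'a measure" and S :: "'i set"
  assumes P: "prob_space P0" and fin: "finite S" and False: "S \<noteq> {}"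
  shows "prob_space.indep_vars (PiM S (\<lambda>_. P0)) (\<lambda>_. P0) (\<lambda>i y. y i) S"
proof -
  interpret prob_space "PiM S (\<lambda>_. P0)" by (intro prob_space_PiM P)
  have "distr (PiM S (\<lambda>_. P0)) (PiM S (\<lambda>_. P0)) (\<lambda>x. \<lambda>i\<in>S. x i) = distr (PiM S (\<lambda>_. P0)) (PiM S (\<lambda>_. P0)) (\<lambda>x. x)"
    by (intro distr_cong) (auto simp: space_PiM)
  also have "\<dots> = PiM S (\<lambda>_. P0)" by simp
  also have "\<dots> = PiM S (\<lambda>i. distr (PiM S (\<lambda>_. P0)) P0 (\<lambda>y. y i))"
    by (intro PiM_cong refl distr_PiM_component[symmetric]) (auto simp: P)
  finally show ?thesis
    by (subst indep_vars_iff_distr_eq_PiM'[OF False]) auto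
qed

lemma hoeff_PiM:
  fixes P0 :: "'a measure" and S :: "'i set" and g :: "'a \<Rightarrow> real" and Mb \<epsilon> :: real
  assumes P: "prob_space P0" and fin: "finite S" and ne: "S \<noteq> {}"
    and g[measurable]: "g \<in> borel_measurable P0" and gb: "AE z in P0. g z \<in> {0..Mb}"
    and Mb: "0 < Mb" and eps: "\<epsilon> \<ge> 0"
  shows "measure (PiM S (\<lambda>_. P0)) {y \<in> space (PiM S (\<lambda>_. P0)).
            \<bar>(\<Sum>i\<in>S. g (y i)) / card S - (\<integral>z. g z \<partial>P0)\<bar> \<ge> \<epsilon>}
          \<le> 2 * exp (-2 * real (card S) * \<epsilon>\<^sup>2 / Mb\<^sup>2)"
proof -
  obtain i0 where i0: "i0 \<in> S" using ne by auto
  interpret prob_space "PiM S (\<lambda>_. P0)" by (intro prob_space_PiM P)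
  interpret H: Hoeffding_ineq_iid "PiM S (\<lambda>_. P0)" S "\<lambda>i y. g (y i)" "\<lambda>y. g (y i0)" 0 Mb
    "expectation (\<lambda>y. g (y i0))"
  proof unfold_locales
    show "finite S" by fact
    show "indep_vars (\<lambda>_. borel) (\<lambda>i y. g (y i)) S"
      by (rule indep_vars_compose2[OF indep_components[OF P fin ne]]) auto
    fix i assume i: "i \<in> S"
    show "distr (PiM S (\<lambda>_. P0)) borel (\<lambda>y. g (y i)) = distr (PiM S (\<lambda>_. P0)) borel (\<lambda>y. g (y i0))"
    proof -
      have "distr (PiM S (\<lambda>_. P0)) borel (\<lambda>y. g (y i)) = distr (distr (PiM S (\<lambda>_. P0)) P0 (\<lambda>y. y i)) borel g"
        using i by (subst distr_distr) (auto simp: comp_def)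
      also have "\<dots> = distr P0 borel g" using i by (subst distr_PiM_component) (auto simp: P)
      also have "\<dots> = distr (distr (PiM S (\<lambda>_. P0)) P0 (\<lambda>y. y i0)) borel g"
        using i0 by (subst distr_PiM_component) (auto simp: P)
      also have "\<dots> = distr (PiM S (\<lambda>_. P0)) borel (\<lambda>y. g (y i0))"
        using i0 by (subst distr_distr) (auto simp: comp_def)
      finally show ?thesis .
    qed
  next
    show "random_variable borel (\<lambda>y. g (y i0))" using i0 by measurable
    show "AE y in PiM S (\<lambda>_. P0). g (y i0) \<in> {0..Mb}"
      by (rule AE_PiM_component[where P="\<lambda>z. g z \<in> {0..Mb}", OF _ i0 gb]) (rule P)
  qed
  have E: "expectation (\<lambda>y. g (y i0)) = (\<integral>z. g z \<partial>P0)"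
  proof -
    have "expectation (\<lambda>y. g (y i0)) = (\<integral>z. g z \<partial>distr (PiM S (\<lambda>_. P0)) P0 (\<lambda>y. y i0))"
      by (rule integral_distr[symmetric, OF measurable_component_singleton[OF i0] g])
    also have "\<dots> = (\<integral>z. g z \<partial>P0)"
      by (subst distr_PiM_component[of S "\<lambda>_. P0" i0]) (auto simp: P i0)
    finally show ?thesis .
  qed
  show ?thesis
    using H.Hoeffding_ineq_abs_ge'[OF eps Mb ne] unfolding E by (simp only: diff_zero)
qed

lemma hoeff_split:
  fixes P0 :: "'a measure" and T S :: "'i set" and g :: "('i \<Rightarrow> 'a) \<Rightarrow> 'a \<Rightarrow> real" and Mb \<epsilon> :: real
  assumes P: "prob_space P0" and finT: "finite T" and finS: "finite S" and disj: "T \<inter> S = {}"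
    and ne: "S \<noteq> {}"
    and g_meas: "(\<lambda>(x, z). g x z) \<in> borel_measurable (PiM T (\<lambda>_. P0) \<Otimes>\<^sub>M P0)"
    and gb: "\<forall>x\<in>space (PiM T (\<lambda>_. P0)). AE z in P0. g x z \<in> {0..Mb}"
    and Mb: "0 < Mb" and eps: "\<epsilon> \<ge> 0"
  shows "emeasure (PiM (T \<union> S) (\<lambda>_. P0)) {d \<in> space (PiM (T \<union> S) (\<lambda>_. P0)).
            \<epsilon> \<le> \<bar>(\<Sum>i\<in>S. g (restrict d T) (d i)) / real (card S) - (\<integral>z. g (restrict d T) z \<partial>P0)\<bar>}
          \<le> ennreal (2 * exp (-2 * real (card S) * \<epsilon>\<^sup>2 / Mb\<^sup>2))"
proof -
  let ?PT = "PiM T (\<lambda>_. P0)" and ?PS = "PiM S (\<lambda>_. P0)" and ?PO = "PiM (T \<union> S) (\<lambda>_. P0)"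
  interpret PP: product_sigma_finite "\<lambda>_::'i. P0"
    by (simp add: product_sigma_finite_def prob_space_imp_sigma_finite P)
  interpret PS: prob_space ?PS by (intro prob_space_PiM P)
  interpret PT: prob_space ?PT by (intro prob_space_PiM P)
  interpret P0: prob_space P0 by (rule P)
  define F where "F d = \<bar>(\<Sum>i\<in>S. g (restrict d T) (d i)) / real (card S) - (\<integral>z. g (restrict d T) z \<partial>P0)\<bar>" for d
  define A where "A = {d \<in> space ?PO. \<epsilon> \<le> F d}"
  have rT: "(\<lambda>d. restrict d T) \<in> measurable ?PO ?PT"
    by (rule measurable_restrict_subset) auto
  have m1: "(\<lambda>d. g (restrict d T) (d i)) \<in> borel_measurable ?PO" if i: "i \<in> S" for i
  proof -
    have "(\<lambda>d. (restrict d T, d i)) \<in> measurable ?PO (?PT \<Otimes>\<^sub>M P0)"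
      using i by (intro measurable_Pair rT measurable_component_singleton) auto
    from measurable_comp[OF this g_meas] show ?thesis by (simp add: comp_def)
  qed
  have m2: "(\<lambda>d. \<integral>z. g (restrict d T) z \<partial>P0) \<in> borel_measurable ?PO"
  proof (rule sigma_finite_measure.borel_measurable_lebesgue_integral[OF prob_space_imp_sigma_finite[OF P]])
    have "(\<lambda>p. (restrict (fst p) T, snd p)) \<in> measurable (?PO \<Otimes>\<^sub>M P0) (?PT \<Otimes>\<^sub>M P0)"
      by (intro measurable_Pair measurable_compose[OF measurable_fst rT] measurable_snd)
    from measurable_comp[OF this g_meas] show "(\<lambda>(d, z). g (restrict d T) z) \<in> borel_measurable (?PO \<Otimes>\<^sub>M P0)"
      by (simp add: comp_def split_beta')
  qed
  have Fm: "F \<in> borel_measurable ?PO"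
    unfolding F_def using m1 m2 finS by (intro borel_measurable_abs borel_measurable_diff borel_measurable_divide borel_measurable_sum) auto
  have A: "A \<in> sets ?PO"
    unfolding A_def using Fm by measurable
  have "emeasure ?PO A = emeasure (distr (?PT \<Otimes>\<^sub>M ?PS) ?PO (merge T S)) A"
    by (simp add: PP.distr_merge[OF disj finT finS])
  also have "\<dots> = emeasure (?PT \<Otimes>\<^sub>M ?PS) (merge T S -` A \<inter> space (?PT \<Otimes>\<^sub>M ?PS))"
    by (rule emeasure_distr[OF measurable_merge A])
  also have "\<dots> = (\<integral>\<^sup>+x. emeasure ?PS (Pair x -` (merge T S -` A \<inter> space (?PT \<Otimes>\<^sub>M ?PS))) \<partial>?PT)"
    by (rule PS.emeasure_pair_measure_alt) (rule measurable_sets[OF measurable_merge A])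
  also have "\<dots> \<le> (\<integral>\<^sup>+x. ennreal (2 * exp (-2 * real (card S) * \<epsilon>\<^sup>2 / Mb\<^sup>2)) \<partial>?PT)"
  proof (rule nn_integral_mono)
    fix x assume x: "x \<in> space ?PT"
    have gx: "g x \<in> borel_measurable P0"
      using measurable_Pair2[OF g_meas x] by simp
    have xe: "restrict x T = x" using x by (simp add: space_PiM PiE_def extensional_restrict)
    have eq: "Pair x -` (merge T S -` A \<inter> space (?PT \<Otimes>\<^sub>M ?PS)) =
       {y \<in> space ?PS. \<epsilon> \<le> \<bar>(\<Sum>i\<in>S. g x (y i)) / real (card S) - (\<integral>z. g x z \<partial>P0)\<bar>}"
    proof -
      have "y \<in> space ?PS \<Longrightarrow> merge T S (x, y) \<in> space ?PO" for y
        using x by (auto simp: space_PiM PiE_def Pi_def merge_def extensional_def)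
      moreover have "y \<in> space ?PS \<Longrightarrow> F (merge T S (x, y)) = \<bar>(\<Sum>i\<in>S. g x (y i)) / real (card S) - (\<integral>z. g x z \<partial>P0)\<bar>" for y
        unfolding F_def using disj xe by (simp add: restrict_merge)
      ultimately show ?thesis using x unfolding A_def by (auto simp: space_pair_measure)
    qed
    have "emeasure ?PS {y \<in> space ?PS. \<epsilon> \<le> \<bar>(\<Sum>i\<in>S. g x (y i)) / real (card S) - (\<integral>z. g x z \<partial>P0)\<bar>}
       = ennreal (measure ?PS {y \<in> space ?PS. \<epsilon> \<le> \<bar>(\<Sum>i\<in>S. g x (y i)) / real (card S) - (\<integral>z. g x z \<partial>P0)\<bar>})"
      by (rule PS.emeasure_eq_measure)
    also have "\<dots> \<le> ennreal (2 * exp (-2 * real (card S) * \<epsilon>\<^sup>2 / Mb\<^sup>2))"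
      using gb x by (intro ennreal_leI hoeff_PiM[OF P finS ne gx _ Mb eps]) auto
    finally show "emeasure ?PS (Pair x -` (merge T S -` A \<inter> space (?PT \<Otimes>\<^sub>M ?PS))) \<le> ennreal (2 * exp (-2 * real (card S) * \<epsilon>\<^sup>2 / Mb\<^sup>2))"
      unfolding eq .
  qed
  also have "\<dots> = ennreal (2 * exp (-2 * real (card S) * \<epsilon>\<^sup>2 / Mb\<^sup>2))"
    by (simp add: PT.emeasure_space_1)
  finally show ?thesis unfolding A_def F_def .
qed

lemma exp_max_bound:
  fixes M :: "'b measure" and Ks :: "'k set" and A :: "'k \<Rightarrow> 'b \<Rightarrow> real" and Mb t :: real
  assumes M: "prob_space M" and fin: "finite Ks" and ne: "Ks \<noteq> {}"
    and Am: "\<And>k. k \<in> Ks \<Longrightarrow> A k \<in> borel_measurable M"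
    and Ab: "AE d in M. \<forall>k\<in>Ks. \<bar>A k d\<bar> \<le> Mb"
    and t: "t \<ge> 0" and Mb: "Mb \<ge> 0"
  shows "integrable M (\<lambda>d. Max ((\<lambda>k. \<bar>A k d\<bar>) ` Ks))"
    and "(\<integral>d. Max ((\<lambda>k. \<bar>A k d\<bar>) ` Ks) \<partial>M) \<le> t + Mb * (\<Sum>k\<in>Ks. measure M {d\<in>space M. t \<le> \<bar>A k d\<bar>})"
proof -
  interpret prob_space M by (rule M)
  define B where "B k = {d\<in>space M. t \<le> \<bar>A k d\<bar>}" for k
  have Bs: "B k \<in> sets M" if "k \<in> Ks" for k
    unfolding B_def using Am[OF that] by measurable
  have mm: "(\<lambda>d. Max ((\<lambda>k. \<bar>A k d\<bar>) ` Ks)) \<in> borel_measurable M"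
    by (rule borel_measurable_Max[OF fin]) (use Am in auto)
  show int: "integrable M (\<lambda>d. Max ((\<lambda>k. \<bar>A k d\<bar>) ` Ks))"
  proof (rule integrable_const_bound[where B=Mb, OF _ mm])
    show "AE x in M. norm (Max ((\<lambda>k. \<bar>A k x\<bar>) ` Ks)) \<le> Mb"
      using Ab
    proof (rule eventually_mono)
      fix x assume h: "\<forall>k\<in>Ks. \<bar>A k x\<bar> \<le> Mb"
      obtain k0 where k0: "k0 \<in> Ks" "Max ((\<lambda>k. \<bar>A k x\<bar>) ` Ks) = \<bar>A k0 x\<bar>"
        proof -
          have "Max ((\<lambda>k. \<bar>A k x\<bar>) ` Ks) \<in> (\<lambda>k. \<bar>A k x\<bar>) ` Ks" by (rule Max_in) (use fin ne in auto)
          then show ?thesis using that by blast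
        qed
      show "norm (Max ((\<lambda>k. \<bar>A k x\<bar>) ` Ks)) \<le> Mb" using k0 h by simp
    qed
  qed
  have isum: "integrable M (\<lambda>d. \<Sum>k\<in>Ks. indicator (B k) d :: real)"
      by (rule Bochner_Integration.integrable_sum[where f="\<lambda>k. indicator (B k)"]) (auto intro!: integrable_real_indicator Bs simp: emeasure_eq_measure)
  have int2: "integrable M (\<lambda>d. t + Mb * (\<Sum>k\<in>Ks. indicator (B k) d))"
  proof -
    have "integrable M (\<lambda>d. t)" by simp
    with isum show ?thesis by (intro Bochner_Integration.integrable_add integrable_mult_right)
  qed
  have "(\<integral>d. Max ((\<lambda>k. \<bar>A k d\<bar>) ` Ks) \<partial>M) \<le> (\<integral>d. t + Mb * (\<Sum>k\<in>Ks. indicator (B k) d) \<partial>M)"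
  proof (rule integral_mono_AE[OF int int2])
    show "AE d in M. Max ((\<lambda>k. \<bar>A k d\<bar>) ` Ks) \<le> t + Mb * (\<Sum>k\<in>Ks. indicator (B k) d)"
      using AE_conjI[OF Ab AE_space]
    proof (rule eventually_mono)
      fix x assume hx: "(\<forall>k\<in>Ks. \<bar>A k x\<bar> \<le> Mb) \<and> x \<in> space M"
      show "Max ((\<lambda>k. \<bar>A k x\<bar>) ` Ks) \<le> t + Mb * (\<Sum>k\<in>Ks. indicator (B k) x)"
      proof -
        have h: "\<forall>k\<in>Ks. \<bar>A k x\<bar> \<le> Mb" and x: "x \<in> space M" using hx by auto
        obtain k0 where k0: "k0 \<in> Ks" "Max ((\<lambda>k. \<bar>A k x\<bar>) ` Ks) = \<bar>A k0 x\<bar>"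
          proof -
          have "Max ((\<lambda>k. \<bar>A k x\<bar>) ` Ks) \<in> (\<lambda>k. \<bar>A k x\<bar>) ` Ks" by (rule Max_in) (use fin ne in auto)
          then show ?thesis using that by blast
        qed
        have s0: "0 \<le> (\<Sum>k\<in>Ks. indicator (B k) x :: real)" by (intro sum_nonneg) auto
        show "Max ((\<lambda>k. \<bar>A k x\<bar>) ` Ks) \<le> t + Mb * (\<Sum>k\<in>Ks. indicator (B k) x)"
        proof (cases "t \<le> \<bar>A k0 x\<bar>")
          case True
          then have "x \<in> B k0" using x unfolding B_def by auto
          then have "(1::real) \<le> (\<Sum>k\<in>Ks. indicator (B k) x)"
            using member_le_sum[of k0 Ks "\<lambda>k. indicator (B k) x :: real"] k0 fin by auto
          then have "Mb \<le> Mb * (\<Sum>k\<in>Ks. indicator (B k) x)" using Mb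
            by (metis mult.right_neutral mult_left_mono)
          then show ?thesis using k0 h t by auto
        next
          case False
          then show ?thesis using k0 Mb s0 by (smt (verit) mult_nonneg_nonneg)
        qed
      qed
    qed
  qed
  also have "\<dots> = t + Mb * (\<Sum>k\<in>Ks. measure M (B k))"
  proof -
    have "(\<integral>d. t + Mb * (\<Sum>k\<in>Ks. indicator (B k) d) \<partial>M) = t + Mb * (\<integral>d. (\<Sum>k\<in>Ks. indicator (B k) d) \<partial>M)"
      using isum by (simp add: prob_space)
    also have "(\<integral>d. (\<Sum>k\<in>Ks. indicator (B k) d) \<partial>M) = (\<Sum>k\<in>Ks. measure M (B k))"
      using Bs by (subst Bochner_Integration.integral_sum) (auto intro!: integrable_real_indicator simp: B_def Int_absorb2 emeasure_eq_measure intro!: sum.cong)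
    finally show ?thesis .
  qed
  finally show "(\<integral>d. Max ((\<lambda>k. \<bar>A k d\<bar>) ` Ks) \<partial>M) \<le> t + Mb * (\<Sum>k\<in>Ks. measure M {d\<in>space M. t \<le> \<bar>A k d\<bar>})"
    unfolding B_def .
qed

lemma pinball_eq:
  "pinball \<alpha> \<psi> z = (if snd z > \<psi> (fst z) then \<alpha> * \<bar>snd z - \<psi> (fst z)\<bar> else (1 - \<alpha>) * \<bar>snd z - \<psi> (fst z)\<bar>)"
  by (cases z) (simp add: pinball_def)

lemma pinball_bounds:
  fixes \<alpha> :: real
  assumes "0 \<le> \<alpha>" "\<alpha> \<le> 1"
  shows "0 \<le> pinball \<alpha> \<psi> z" "pinball \<alpha> \<psi> z \<le> \<bar>snd z - \<psi> (fst z)\<bar>"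
proof -
  have a: "\<alpha> * \<bar>u\<bar> \<le> \<bar>u\<bar>" "(1 - \<alpha>) * \<bar>u\<bar> \<le> \<bar>u\<bar>" for u :: real
    using assms by (auto intro: mult_left_le_one_le)
  show "0 \<le> pinball \<alpha> \<psi> z" using assms by (simp add: pinball_eq)
  show "pinball \<alpha> \<psi> z \<le> \<bar>snd z - \<psi> (fst z)\<bar>"
    unfolding pinball_eq using a[of "snd z - \<psi> (fst z)"] by (cases "\<psi> (fst z) < snd z") (simp_all only: if_True if_False)
qed

lemma integral_bounds:
  fixes f :: "'a \<Rightarrow> real"
  assumes M: "prob_space M" and b: "AE z in M. f z \<in> {0..Mb}" and Mb: "0 \<le> Mb"
  shows "0 \<le> (\<integral>z. f z \<partial>M)" "(\<integral>z. f z \<partial>M) \<le> Mb"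
proof -
  interpret prob_space M by (rule M)
  show "0 \<le> (\<integral>z. f z \<partial>M)"
    by (rule integral_nonneg_AE) (use b in \<open>auto elim: eventually_mono\<close>)
  show "(\<integral>z. f z \<partial>M) \<le> Mb"
  proof (cases "integrable M f")
    case True
    have "(\<integral>z. f z \<partial>M) \<le> (\<integral>z. Mb \<partial>M)"
      by (rule integral_mono_AE[OF True]) (use b in \<open>auto elim: eventually_mono\<close>)
    then show ?thesis by (simp add: prob_space)
  next
    case False
    then show ?thesis using Mb by (simp add: not_integrable_integral_eq)
  qed
qed

lemma expect_finite:
  fixes f :: "'s \<Rightarrow> real"
  assumes "finite (set_pmf B)"
  shows "measure_pmf.expectation B f = (\<Sum>S\<in>set_pmf B. pmf B S * f S)"
  by (subst integral_measure_pmf[OF assms]) auto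

lemma meas_int_restrict:
  fixes P0 :: "'a measure" and g :: "('i \<Rightarrow> 'a) \<Rightarrow> 'a \<Rightarrow> real"
  assumes P: "prob_space P0" and TI: "T \<subseteq> I"
    and g_meas: "(\<lambda>(x, z). g x z) \<in> borel_measurable (PiM T (\<lambda>_. P0) \<Otimes>\<^sub>M P0)"
  shows "(\<lambda>d. \<integral>z. g (restrict d T) z \<partial>P0) \<in> borel_measurable (PiM I (\<lambda>_. P0))"
proof (rule sigma_finite_measure.borel_measurable_lebesgue_integral[OF prob_space_imp_sigma_finite[OF P]])
  have rT: "(\<lambda>d. restrict d T) \<in> measurable (PiM I (\<lambda>_. P0)) (PiM T (\<lambda>_. P0))"
    by (rule measurable_restrict_subset[OF TI])
  have "(\<lambda>p. (restrict (fst p) T, snd p)) \<in> measurable (PiM I (\<lambda>_. P0) \<Otimes>\<^sub>M P0) (PiM T (\<lambda>_. P0) \<Otimes>\<^sub>M P0)"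
    by (intro measurable_Pair measurable_compose[OF measurable_fst rT] measurable_snd)
  from measurable_comp[OF this g_meas] show "(\<lambda>(d, z). g (restrict d T) z) \<in> borel_measurable (PiM I (\<lambda>_. P0) \<Otimes>\<^sub>M P0)"
    by (simp add: comp_def split_beta')
qed

lemma meas_pt_restrict:
  fixes P0 :: "'a measure" and g :: "('i \<Rightarrow> 'a) \<Rightarrow> 'a \<Rightarrow> real"
  assumes TI: "T \<subseteq> I" and i: "i \<in> I"
    and g_meas: "(\<lambda>(x, z). g x z) \<in> borel_measurable (PiM T (\<lambda>_. P0) \<Otimes>\<^sub>M P0)"
  shows "(\<lambda>d. g (restrict d T) (d i)) \<in> borel_measurable (PiM I (\<lambda>_. P0))"
proof -
  have "(\<lambda>d. (restrict d T, d i)) \<in> measurable (PiM I (\<lambda>_. P0)) (PiM T (\<lambda>_. P0) \<Otimes>\<^sub>M P0)"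
    using i by (intro measurable_Pair measurable_restrict_subset[OF TI] measurable_component_singleton) auto
  from measurable_comp[OF this g_meas] show ?thesis by (simp add: comp_def)
qed

lemma train_ms_restrict:
  "train_ms n d S = image_mset (restrict d ({..<n} - S)) (mset_set ({..<n} - S))"
  unfolding train_ms_def by (intro image_mset_cong) auto

lemma gmeas:
  fixes XM :: "'x measure" and P0 :: "('x \<times> real) measure" and h :: "('i \<Rightarrow> 'x \<times> real) \<Rightarrow> 'x \<Rightarrow> real"
  assumes P0s: "sets P0 = sets (XM \<Otimes>\<^sub>M borel)"
    and hm: "(\<lambda>(d, x). h d x) \<in> borel_measurable (PiM T (\<lambda>_. P0) \<Otimes>\<^sub>M XM)"
  shows "(\<lambda>(x, z). pinball \<alpha> (h x) z) \<in> borel_measurable (PiM T (\<lambda>_. P0) \<Otimes>\<^sub>M P0)"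
proof -
  have fstm: "fst \<in> measurable P0 XM"
    using measurable_fst[of XM borel] by (simp add: measurable_cong_sets[OF P0s refl])
  have sndm: "snd \<in> borel_measurable P0"
    using measurable_snd[of XM borel] by (simp add: measurable_cong_sets[OF P0s refl])
  have "(\<lambda>w. (fst w, fst (snd w))) \<in> measurable (PiM T (\<lambda>_. P0) \<Otimes>\<^sub>M P0) (PiM T (\<lambda>_. P0) \<Otimes>\<^sub>M XM)"
    by (intro measurable_Pair measurable_fst measurable_compose[OF measurable_snd fstm])
  from measurable_comp[OF this hm] have v: "(\<lambda>w. h (fst w) (fst (snd w))) \<in> borel_measurable (PiM T (\<lambda>_. P0) \<Otimes>\<^sub>M P0)"
    by (simp add: comp_def)
  have y: "(\<lambda>w. snd (snd w)) \<in> borel_measurable (PiM T (\<lambda>_. P0) \<Otimes>\<^sub>M P0)"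
    by (rule measurable_compose[OF measurable_snd sndm])
  have "(\<lambda>w. if snd (snd w) > h (fst w) (fst (snd w)) then \<alpha> * \<bar>snd (snd w) - h (fst w) (fst (snd w))\<bar>
            else (1 - \<alpha>) * \<bar>snd (snd w) - h (fst w) (fst (snd w))\<bar>) \<in> borel_measurable (PiM T (\<lambda>_. P0) \<Otimes>\<^sub>M P0)"
    using v y by measurable
  then show ?thesis by (simp add: pinball_eq split_beta')
qed

lemma per_n:
  fixes XM :: "'x measure" and P0 :: "('x \<times> real) measure" and psi0 :: "'x \<Rightarrow> real"
    and \<alpha> C0 p t :: real and B :: "nat set pmf" and K :: nat and n :: nat
    and alg :: "nat \<Rightarrow> ('x \<times> real) multiset \<Rightarrow> 'x \<Rightarrow> real"
    and kh kt :: "(nat \<Rightarrow> 'x \<times> real) \<Rightarrow> nat"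
  assumes alpha: "0 < \<alpha>" "\<alpha> < 1"
    and P: "prob_space P0" and P0s: "sets P0 = sets (XM \<Otimes>\<^sub>M borel)"
    and Y_bounded: "AE z in P0. \<bar>snd z\<bar> \<le> C0"
    and Bsupp: "\<forall>S\<in>set_pmf B. S \<subseteq> {..<n} \<and> \<bar>real (card S) - p * real n\<bar> \<le> 1"
    and alg_bounded: "\<forall>k D x. k \<in> {1..K} \<longrightarrow> \<bar>alg k D x\<bar> \<le> C0"
    and alg_meas: "\<forall>k (S::nat set). k \<in> {1..K} \<longrightarrow> finite S \<longrightarrow>
        (\<lambda>(d, x). alg k (image_mset d (mset_set S)) x) \<in> borel_measurable (PiM S (\<lambda>_. P0) \<Otimes>\<^sub>M XM)"
    and khm: "kh \<in> measurable (PiM {..<n} (\<lambda>_. P0)) (count_space UNIV)"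
    and ktm: "kt \<in> measurable (PiM {..<n} (\<lambda>_. P0)) (count_space UNIV)"
    and khp: "\<forall>d\<in>space (PiM {..<n} (\<lambda>_. P0)). kh d \<in> {1..K} \<and>
          (\<forall>k\<in>{1..K}. emp_cv_risk \<alpha> B n (alg (kh d)) d \<le> emp_cv_risk \<alpha> B n (alg k) d)"
    and ktp: "\<forall>d\<in>space (PiM {..<n} (\<lambda>_. P0)). kt d \<in> {1..K} \<and>
          (\<forall>k\<in>{1..K}. oracle_cv_risk P0 \<alpha> B n (alg (kt d)) d \<le> oracle_cv_risk P0 \<alpha> B n (alg k) d)"
  shows "(\<integral>d. oracle_cv_risk P0 \<alpha> B n (alg (kh d)) d - (\<integral>z. pinball \<alpha> psi0 z \<partial>P0) \<partial>PiM {..<n} (\<lambda>_. P0))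
       \<le> (\<integral>d. oracle_cv_risk P0 \<alpha> B n (alg (kt d)) d - (\<integral>z. pinball \<alpha> psi0 z \<partial>P0) \<partial>PiM {..<n} (\<lambda>_. P0))
          + (2 * C0 + 1)"
    and "p * real n \<ge> 2 \<Longrightarrow> t \<ge> 0 \<Longrightarrow>
       (\<integral>d. oracle_cv_risk P0 \<alpha> B n (alg (kh d)) d - (\<integral>z. pinball \<alpha> psi0 z \<partial>P0) \<partial>PiM {..<n} (\<lambda>_. P0))
       \<le> (\<integral>d. oracle_cv_risk P0 \<alpha> B n (alg (kt d)) d - (\<integral>z. pinball \<alpha> psi0 z \<partial>P0) \<partial>PiM {..<n} (\<lambda>_. P0))
          + 2 * (t + (2 * C0 + 1) * real K * (2 * exp (-2 * (p * real n - 1) * t\<^sup>2 / (2 * C0 + 1)\<^sup>2)))"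
proof -
  define Mb where "Mb = 2 * C0 + 1"
  define L where "L = (\<integral>z. pinball \<alpha> psi0 z \<partial>P0)"
  define \<Omega> where "\<Omega> = PiM {..<n} (\<lambda>_. P0)"
  interpret Pp: prob_space P0 by (rule P)
  interpret \<Omega>: prob_space \<Omega> unfolding \<Omega>_def by (intro prob_space_PiM P)
  have C0: "C0 \<ge> 0"
  proof -
    have "AE z in P0. 0 \<le> C0" using Y_bounded by (rule eventually_mono) auto
    then show ?thesis by simp
  qed
  have Mb: "Mb > 0" unfolding Mb_def using C0 by simp
  define supp where "supp = set_pmf B"
  have fin_supp: "finite supp"
  proof (rule finite_subset[of _ "Pow {..<n}"])
    show "supp \<subseteq> Pow {..<n}" using Bsupp unfolding supp_def by auto
  qed simp
  obtain d0 where d0: "d0 \<in> space \<Omega>" using \<Omega>.not_empty by auto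
  have K1: "1 \<le> K" using khp d0 unfolding \<Omega>_def by fastforce
  define T where "T S = {..<n} - S" for S :: "nat set"
  define g where "g k S x z = pinball \<alpha> (alg k (image_mset x (mset_set (T S)))) z" for k S x z
  define orS where "orS k S d = (\<integral>z. g k S (restrict d (T S)) z \<partial>P0)" for k S d
  define emS where "emS k S d = (\<Sum>i\<in>S. g k S (restrict d (T S)) (d i)) / real (card S)" for k S d
  define OR where "OR k d = oracle_cv_risk P0 \<alpha> B n (alg k) d" for k d
  define EM where "EM k d = emp_cv_risk \<alpha> B n (alg k) d" for k d
  have Oc: "OR k d = (\<Sum>S\<in>supp. pmf B S * orS k S d)" for k d
    unfolding OR_def oracle_cv_risk_def orS_def g_def T_def supp_def
    by (subst expect_finite) (use fin_supp supp_def in \<open>simp_all add: train_ms_restrict\<close>)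
  have Ec: "EM k d = (\<Sum>S\<in>supp. pmf B S * emS k S d)" for k d
    unfolding EM_def emp_cv_risk_def emS_def g_def T_def supp_def
    by (subst expect_finite) (use fin_supp supp_def in \<open>simp_all add: train_ms_restrict\<close>)
  have gm: "(\<lambda>(x, z). g k S x z) \<in> borel_measurable (PiM (T S) (\<lambda>_. P0) \<Otimes>\<^sub>M P0)" if k: "k \<in> {1..K}" for k S
    unfolding g_def
    by (rule gmeas[OF P0s]) (use alg_meas k in \<open>auto simp: T_def\<close>)
  have gpt: "g k S x z \<in> {0..Mb}" if k: "k \<in> {1..K}" and z: "\<bar>snd z\<bar> \<le> C0" for k S x z
  proof -
    have "\<bar>alg k (image_mset x (mset_set (T S))) (fst z)\<bar> \<le> C0" using alg_bounded k by blast
    then have "\<bar>snd z - alg k (image_mset x (mset_set (T S))) (fst z)\<bar> \<le> Mb"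
      using z unfolding Mb_def by linarith
    then show ?thesis unfolding g_def using pinball_bounds[of \<alpha>] alpha
      by (smt (verit, best) atLeastAtMost_iff)
  qed
  have gb: "AE z in P0. g k S x z \<in> {0..Mb}" if k: "k \<in> {1..K}" for k S x
    using Y_bounded by (rule eventually_mono) (rule gpt[OF k])
  have orb: "0 \<le> orS k S d \<and> orS k S d \<le> Mb" if k: "k \<in> {1..K}" for k S d
    unfolding orS_def using integral_bounds[OF P gb[OF k] less_imp_le[OF Mb]] by simp
  have pmf_sum: "(\<Sum>S\<in>supp. pmf B S) = 1"
    using sum_pmf_eq_1[OF fin_supp] supp_def by simp
  have Ob: "0 \<le> OR k d \<and> OR k d \<le> Mb" if k: "k \<in> {1..K}" for k d
  proof -
    have "0 \<le> (\<Sum>S\<in>supp. pmf B S * orS k S d)"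
      using orb[OF k] by (intro sum_nonneg) auto
    moreover have "(\<Sum>S\<in>supp. pmf B S * orS k S d) \<le> (\<Sum>S\<in>supp. pmf B S * Mb)"
      using orb[OF k] by (intro sum_mono mult_left_mono) auto
    ultimately show ?thesis unfolding Oc using pmf_sum by (simp add: sum_distrib_right[symmetric])
  qed
  have TS: "T S \<subseteq> {..<n}" for S unfolding T_def by auto
  have orm: "orS k S \<in> borel_measurable \<Omega>" if k: "k \<in> {1..K}" for k S
    unfolding orS_def[abs_def] \<Omega>_def by (rule meas_int_restrict[OF P TS gm[OF k]])
  have emm: "emS k S \<in> borel_measurable \<Omega>" if k: "k \<in> {1..K}" and S: "S \<in> supp" for k S
  proof -
    have "(\<lambda>d. g k S (restrict d (T S)) (d i)) \<in> borel_measurable \<Omega>" if i: "i \<in> S" for i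
      unfolding \<Omega>_def
      by (rule meas_pt_restrict[OF TS _ gm[OF k]]) (use i S Bsupp supp_def in auto)
    then show ?thesis unfolding emS_def[abs_def]
      by (intro borel_measurable_divide borel_measurable_sum) auto
  qed
  have Om: "OR k \<in> borel_measurable \<Omega>" if k: "k \<in> {1..K}" for k
  proof -
    have "(\<lambda>d. \<Sum>S\<in>supp. pmf B S * orS k S d) \<in> borel_measurable \<Omega>"
      using orm[OF k] by (intro borel_measurable_sum borel_measurable_times borel_measurable_const) auto
    then show ?thesis unfolding Oc[abs_def] .
  qed
  define A where "A S k d = emS k S d - orS k S d" for S k d
  define MS where "MS S d = Max ((\<lambda>k. \<bar>A S k d\<bar>) ` {1..K})" for S d
  define D where "D d = (\<Sum>S\<in>supp. pmf B S * MS S d)" for d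
  have Am: "A S k \<in> borel_measurable \<Omega>" if "k \<in> {1..K}" "S \<in> supp" for S k
    unfolding A_def[abs_def] using orm emm that by (intro borel_measurable_diff) auto
  have good: "AE d in \<Omega>. \<forall>i\<in>{..<n}. \<bar>snd (d i)\<bar> \<le> C0"
  proof (rule eventually_ball_finite)
    show "\<forall>i\<in>{..<n}. AE d in \<Omega>. \<bar>snd (d i)\<bar> \<le> C0"
      unfolding \<Omega>_def by (intro ballI AE_PiM_component[where P="\<lambda>z. \<bar>snd z\<bar> \<le> C0" and I="{..<n}" and M="\<lambda>_. P0", OF _ _ Y_bounded]) (auto simp: P)
  qed simp
  have Ab: "AE d in \<Omega>. \<forall>k\<in>{1..K}. \<bar>A S k d\<bar> \<le> Mb" if S: "S \<in> supp" for S
    using good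
  proof (rule eventually_mono)
    fix d :: "nat \<Rightarrow> 'x \<times> real" assume h: "\<forall>i\<in>{..<n}. \<bar>snd (d i)\<bar> \<le> C0"
    show "\<forall>k\<in>{1..K}. \<bar>A S k d\<bar> \<le> Mb"
    proof
      fix k assume k: "k \<in> {1..K}"
      have "0 \<le> emS k S d \<and> emS k S d \<le> Mb"
      proof (cases "card S = 0")
        case True then show ?thesis unfolding emS_def using Mb by simp
      next
        case False
        have each: "g k S (restrict d (T S)) (d i) \<in> {0..Mb}" if i: "i \<in> S" for i
          using gpt[OF k] h i S Bsupp supp_def by blast
        have s1: "0 \<le> (\<Sum>i\<in>S. g k S (restrict d (T S)) (d i))" using each by (intro sum_nonneg) auto
        have "(\<Sum>i\<in>S. g k S (restrict d (T S)) (d i)) \<le> (\<Sum>i\<in>S. Mb)" using each by (intro sum_mono) auto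
        then have s2: "(\<Sum>i\<in>S. g k S (restrict d (T S)) (d i)) \<le> real (card S) * Mb" by simp
        show ?thesis unfolding emS_def using s1 s2 False
          by (auto simp: divide_simps mult.commute)
      qed
      then show "\<bar>A S k d\<bar> \<le> Mb" unfolding A_def using orb[OF k, of S d] by linarith
    qed
  qed
  have MSi: "integrable \<Omega> (MS S)" if S: "S \<in> supp" for S
    unfolding MS_def[abs_def]
    by (rule exp_max_bound(1)[OF \<Omega>.prob_space_axioms _ _ _ Ab[OF S] order_refl less_imp_le[OF Mb]])
       (use K1 Am S in auto)
  have Di: "integrable \<Omega> D"
    unfolding D_def[abs_def] using MSi by (intro Bochner_Integration.integrable_sum integrable_mult_right) auto
  have DO: "\<bar>EM k d - OR k d\<bar> \<le> D d" if k: "k \<in> {1..K}" for k d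
  proof -
    have "EM k d - OR k d = (\<Sum>S\<in>supp. pmf B S * A S k d)"
      unfolding Ec Oc A_def by (simp add: sum_subtractf[symmetric] right_diff_distrib)
    also have "\<bar>\<dots>\<bar> \<le> (\<Sum>S\<in>supp. \<bar>pmf B S * A S k d\<bar>)" by (rule sum_abs)
    also have "\<dots> \<le> (\<Sum>S\<in>supp. pmf B S * MS S d)"
    proof (rule sum_mono)
      fix S assume S: "S \<in> supp"
      have "\<bar>A S k d\<bar> \<le> MS S d" unfolding MS_def using k by (intro Max_ge) auto
      then show "\<bar>pmf B S * A S k d\<bar> \<le> pmf B S * MS S d"
        by (simp add: abs_mult mult_left_mono)
    qed
    finally show ?thesis unfolding D_def .
  qed
  have pw: "OR (kh d) d \<le> OR (kt d) d + 2 * D d" if d: "d \<in> space \<Omega>" for d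
  proof -
    have h1: "kh d \<in> {1..K}" and h2: "kt d \<in> {1..K}" using khp ktp d unfolding \<Omega>_def by auto
    have "EM (kh d) d \<le> EM (kt d) d" using khp d h2 unfolding \<Omega>_def EM_def by auto
    then show ?thesis using DO[OF h1, of d] DO[OF h2, of d] by linarith
  qed
  have compm: "(\<lambda>d. OR (kk d) d) \<in> borel_measurable \<Omega>"
    if kkm: "kk \<in> measurable \<Omega> (count_space UNIV)" and kkr: "\<forall>d\<in>space \<Omega>. kk d \<in> {1..K}" for kk
  proof -
    define F where "F i d = OR (if i \<in> {1..K} then i else 1) d" for i d
    have "(\<lambda>d. F (kk d) d) \<in> borel_measurable \<Omega>"
      by (rule measurable_compose_countable[OF _ kkm]) (use Om K1 in \<open>auto simp: F_def\<close>)
    then show ?thesis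
      by (rule measurable_cong[THEN iffD1, rotated]) (use kkr in \<open>auto simp: F_def\<close>)
  qed
  have compi: "integrable \<Omega> (\<lambda>d. OR (kk d) d)"
    if kkm: "kk \<in> measurable \<Omega> (count_space UNIV)" and kkr: "\<forall>d\<in>space \<Omega>. kk d \<in> {1..K}" for kk
  proof (rule \<Omega>.integrable_const_bound[where B=Mb, OF _ compm[OF kkm kkr]])
    show "AE x in \<Omega>. norm (OR (kk x) x) \<le> Mb"
      using kkr Ob by (intro AE_I2) auto
  qed
  have khr: "\<forall>d\<in>space \<Omega>. kh d \<in> {1..K}" and ktr: "\<forall>d\<in>space \<Omega>. kt d \<in> {1..K}"
    using khp ktp unfolding \<Omega>_def by auto
  have Ih: "integrable \<Omega> (\<lambda>d. OR (kh d) d)" by (rule compi[OF khm[folded \<Omega>_def] khr])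
  have It: "integrable \<Omega> (\<lambda>d. OR (kt d) d)" by (rule compi[OF ktm[folded \<Omega>_def] ktr])
  have red: "(\<integral>d. OR (kk d) d - L \<partial>\<Omega>) = (\<integral>d. OR (kk d) d \<partial>\<Omega>) - L"
    if "integrable \<Omega> (\<lambda>d. OR (kk d) d)" for kk
    using that by (simp add: \<Omega>.prob_space)
  have main: "(\<integral>d. OR (kh d) d \<partial>\<Omega>) \<le> (\<integral>d. OR (kt d) d \<partial>\<Omega>) + 2 * (\<integral>d. D d \<partial>\<Omega>)"
  proof -
    have "(\<integral>d. OR (kh d) d \<partial>\<Omega>) \<le> (\<integral>d. OR (kt d) d + 2 * D d \<partial>\<Omega>)"
      by (rule integral_mono[OF Ih]) (use It Di pw in auto)
    also have "\<dots> = (\<integral>d. OR (kt d) d \<partial>\<Omega>) + 2 * (\<integral>d. D d \<partial>\<Omega>)"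
      using It Di by simp
    finally show ?thesis .
  qed
  have triv: "(\<integral>d. OR (kh d) d \<partial>\<Omega>) \<le> (\<integral>d. OR (kt d) d \<partial>\<Omega>) + Mb"
  proof -
    have "(\<integral>d. OR (kh d) d \<partial>\<Omega>) \<le> Mb"
      using integral_bounds(2)[OF \<Omega>.prob_space_axioms _ less_imp_le[OF Mb], of "\<lambda>d. OR (kh d) d"] Ob khr
      by (auto intro!: AE_I2)
    moreover have "0 \<le> (\<integral>d. OR (kt d) d \<partial>\<Omega>)"
      using integral_bounds(1)[OF \<Omega>.prob_space_axioms _ less_imp_le[OF Mb], of "\<lambda>d. OR (kt d) d"] Ob ktr
      by (auto intro!: AE_I2)
    ultimately show ?thesis by linarith
  qed
  show "(\<integral>d. oracle_cv_risk P0 \<alpha> B n (alg (kh d)) d - (\<integral>z. pinball \<alpha> psi0 z \<partial>P0) \<partial>PiM {..<n} (\<lambda>_. P0))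
       \<le> (\<integral>d. oracle_cv_risk P0 \<alpha> B n (alg (kt d)) d - (\<integral>z. pinball \<alpha> psi0 z \<partial>P0) \<partial>PiM {..<n} (\<lambda>_. P0))
          + (2 * C0 + 1)"
    using triv red[OF Ih] red[OF It] unfolding OR_def L_def \<Omega>_def Mb_def by linarith
  assume pn: "p * real n \<ge> 2" and t: "t \<ge> 0"
  have cardS: "real (card S) \<ge> p * real n - 1" if "S \<in> supp" for S
    using Bsupp that unfolding supp_def by fastforce
  have MSb: "(\<integral>d. MS S d \<partial>\<Omega>) \<le> t + Mb * real K * (2 * exp (-2 * (p * real n - 1) * t\<^sup>2 / Mb\<^sup>2))"
    if S: "S \<in> supp" for S
  proof -
    have Sn: "S \<noteq> {}" using cardS[OF S] pn by auto
    have Ssub: "S \<subseteq> {..<n}" using Bsupp S supp_def by auto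
    have TSu: "T S \<union> S = {..<n}" using Ssub unfolding T_def by auto
    have tail: "measure \<Omega> {d\<in>space \<Omega>. t \<le> \<bar>A S k d\<bar>} \<le> 2 * exp (-2 * (p * real n - 1) * t\<^sup>2 / Mb\<^sup>2)"
      if k: "k \<in> {1..K}" for k
    proof -
      have "emeasure (PiM (T S \<union> S) (\<lambda>_. P0)) {d \<in> space (PiM (T S \<union> S) (\<lambda>_. P0)).
            t \<le> \<bar>(\<Sum>i\<in>S. g k S (restrict d (T S)) (d i)) / real (card S) - (\<integral>z. g k S (restrict d (T S)) z \<partial>P0)\<bar>}
          \<le> ennreal (2 * exp (-2 * real (card S) * t\<^sup>2 / Mb\<^sup>2))"
        by (rule hoeff_split[OF P _ _ _ Sn gm[OF k] _ Mb t])
           (use gb[OF k] Ssub in \<open>auto simp: T_def intro: finite_subset\<close>)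
      then have "emeasure \<Omega> {d\<in>space \<Omega>. t \<le> \<bar>A S k d\<bar>} \<le> ennreal (2 * exp (-2 * real (card S) * t\<^sup>2 / Mb\<^sup>2))"
        unfolding TSu \<Omega>_def A_def emS_def orS_def by simp
      then have "measure \<Omega> {d\<in>space \<Omega>. t \<le> \<bar>A S k d\<bar>} \<le> 2 * exp (-2 * real (card S) * t\<^sup>2 / Mb\<^sup>2)"
        by (simp add: \<Omega>.emeasure_eq_measure)
      also have "\<dots> \<le> 2 * exp (-2 * (p * real n - 1) * t\<^sup>2 / Mb\<^sup>2)"
      proof -
        have "(p * real n - 1) * t\<^sup>2 \<le> real (card S) * t\<^sup>2"
          using cardS[OF S] by (intro mult_right_mono) auto
        then have "-2 * real (card S) * t\<^sup>2 \<le> -2 * (p * real n - 1) * t\<^sup>2" by linarith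
        then have "-2 * real (card S) * t\<^sup>2 / Mb\<^sup>2 \<le> -2 * (p * real n - 1) * t\<^sup>2 / Mb\<^sup>2"
          by (rule divide_right_mono) simp
        then show ?thesis by simp
      qed
      finally show ?thesis .
    qed
    have "(\<integral>d. MS S d \<partial>\<Omega>) \<le> t + Mb * (\<Sum>k\<in>{1..K}. measure \<Omega> {d\<in>space \<Omega>. t \<le> \<bar>A S k d\<bar>})"
      unfolding MS_def
      by (rule exp_max_bound(2)[OF \<Omega>.prob_space_axioms _ _ _ Ab[OF S] t less_imp_le[OF Mb]])
         (use K1 Am S in auto)
    also have "\<dots> \<le> t + Mb * (\<Sum>k\<in>{1..K}. 2 * exp (-2 * (p * real n - 1) * t\<^sup>2 / Mb\<^sup>2))"
      using tail Mb by (intro add_left_mono mult_left_mono sum_mono) auto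
    also have "\<dots> = t + Mb * real K * (2 * exp (-2 * (p * real n - 1) * t\<^sup>2 / Mb\<^sup>2))"
      by simp
    finally show ?thesis .
  qed
  have Db: "(\<integral>d. D d \<partial>\<Omega>) \<le> t + Mb * real K * (2 * exp (-2 * (p * real n - 1) * t\<^sup>2 / Mb\<^sup>2))"
  proof -
    have "(\<integral>d. D d \<partial>\<Omega>) = (\<Sum>S\<in>supp. pmf B S * (\<integral>d. MS S d \<partial>\<Omega>))"
      unfolding D_def using MSi by (subst Bochner_Integration.integral_sum) auto
    also have "\<dots> \<le> (\<Sum>S\<in>supp. pmf B S * (t + Mb * real K * (2 * exp (-2 * (p * real n - 1) * t\<^sup>2 / Mb\<^sup>2))))"
      using MSb by (intro sum_mono mult_left_mono) auto
    also have "\<dots> = t + Mb * real K * (2 * exp (-2 * (p * real n - 1) * t\<^sup>2 / Mb\<^sup>2))"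
      using pmf_sum by (simp add: sum_distrib_right[symmetric])
    finally show ?thesis .
  qed
  show "(\<integral>d. oracle_cv_risk P0 \<alpha> B n (alg (kh d)) d - (\<integral>z. pinball \<alpha> psi0 z \<partial>P0) \<partial>PiM {..<n} (\<lambda>_. P0))
       \<le> (\<integral>d. oracle_cv_risk P0 \<alpha> B n (alg (kt d)) d - (\<integral>z. pinball \<alpha> psi0 z \<partial>P0) \<partial>PiM {..<n} (\<lambda>_. P0))
          + 2 * (t + (2 * C0 + 1) * real K * (2 * exp (-2 * (p * real n - 1) * t\<^sup>2 / (2 * C0 + 1)\<^sup>2)))"
  proof -
    have "(\<integral>d. OR (kh d) d - L \<partial>\<Omega>) \<le> (\<integral>d. OR (kt d) d - L \<partial>\<Omega>)
       + 2 * (t + Mb * real K * (2 * exp (-2 * (p * real n - 1) * t\<^sup>2 / Mb\<^sup>2)))"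
    proof -
      define Q where "Q = Mb * real K * (2 * exp (-2 * (p * real n - 1) * t\<^sup>2 / Mb\<^sup>2))"
      define I1 where "I1 = (\<integral>d. OR (kh d) d \<partial>\<Omega>)"
      define I2 where "I2 = (\<integral>d. OR (kt d) d \<partial>\<Omega>)"
      define I3 where "I3 = (\<integral>d. D d \<partial>\<Omega>)"
      have "I3 \<le> t + Q" using Db unfolding Q_def I3_def .
      moreover have "I1 \<le> I2 + 2 * I3" using main unfolding I1_def I2_def I3_def .
      ultimately have "I1 - L \<le> I2 - L + 2 * (t + Q)" by (simp add: algebra_simps)
      then show ?thesis unfolding Q_def I1_def I2_def red[OF Ih] red[OF It] .
    qed
    then show ?thesis unfolding OR_def L_def \<Omega>_def Mb_def .
  qed
qed

lemma lin_aux: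
  fixes x y A B C :: real
  assumes "x \<le> A" "y \<le> B" "B \<le> C"
  shows "2 * (x + y) \<le> 2 * A + 2 * C"
  using assms by (smt (verit))

lemma rate_pointwise:
  fixes Kn n c a p Mb :: real
  assumes a: "a > 0" and p: "p > 0" and Mb: "Mb > 0" and c: "c > 0"
    and pn: "p * n \<ge> 2" and n3: "n \<ge> 3" and nc: "n \<ge> 2 * (c + 1)"
    and K0: "Kn \<ge> 0" and Kc: "Kn \<le> c * n powr a"
  shows "2 * (Mb * sqrt (ln (2 * (Kn + 1) * n) / (2 * (p * n - 1)))
           + Mb * Kn * (2 * exp (-2 * (p * n - 1) * (Mb * sqrt (ln (2 * (Kn + 1) * n) / (2 * (p * n - 1))))\<^sup>2 / Mb\<^sup>2)))
         \<le> (2 * Mb * sqrt ((a + 2) / p) + 2 * Mb) * (ln n / sqrt n)"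
proof -
  define u where "u = ln (2 * (Kn + 1) * n)"
  define q where "q = 2 * (p * n - 1)"
  define tt where "tt = Mb * sqrt (u / q)"
  have n0: "n > 0" using n3 by simp
  have q0: "q > 0" unfolding q_def using pn by (smt (verit))
  have qpn: "q \<ge> p * n" unfolding q_def using pn by (smt (verit))
  have arg: "2 * (Kn + 1) * n \<ge> 1" using K0 n3 by (smt (verit) mult_less_cancel_right1 mult_nonneg_nonneg)
  have u0: "u \<ge> 0" unfolding u_def using arg by simp
  have tt2: "tt\<^sup>2 = Mb\<^sup>2 * (u / q)"
    unfolding tt_def using u0 q0 by (simp add: power_mult_distrib)
  have ex: "-2 * (p * n - 1) * tt\<^sup>2 / Mb\<^sup>2 = - u"
    unfolding tt2 using q0 Mb unfolding q_def by (simp add: field_simps)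
  have eu: "exp (- u) = 1 / (2 * (Kn + 1) * n)"
    unfolding u_def using arg by (simp add: exp_minus exp_ln divide_inverse)
  have part2: "Mb * Kn * (2 * exp (-2 * (p * n - 1) * tt\<^sup>2 / Mb\<^sup>2)) \<le> Mb / n"
  proof -
    have "Mb * Kn * (2 * exp (-2 * (p * n - 1) * tt\<^sup>2 / Mb\<^sup>2)) = Mb * (Kn / (Kn + 1)) / n"
    proof -
      have nz: "n + Kn * n > 0" "n * 2 + Kn * (n * 2) > 0" "(Kn + 1) * n > 0" using K0 n0 by (auto intro: add_pos_nonneg)
      show ?thesis unfolding ex eu using nz by (simp add: field_simps)
    qed
    also have "\<dots> \<le> Mb * 1 / n"
      using K0 Mb n0 by (intro divide_right_mono mult_left_mono) auto
    finally show ?thesis by simp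
  qed
  define Ln where "Ln = ln n"
  have Ln1: "Ln \<ge> 1"
  proof -
    have "exp 1 \<le> (3::real)" using exp_le by simp
    then have "exp 1 \<le> n" using n3 by linarith
    then show ?thesis unfolding Ln_def using n0 by (simp add: ln_ge_iff)
  qed
  have na: "n powr a \<ge> 1" using n3 a by (simp add: ge_one_powr_ge_zero)
  have u_le: "u \<le> (a + 2) * Ln"
  proof -
    have "2 * (Kn + 1) * n \<le> 2 * (c * n powr a + 1) * n" using Kc n0 by simp
    also have "\<dots> \<le> 2 * ((c + 1) * n powr a) * n" using na n0 by (simp add: algebra_simps)
    finally have le: "2 * (Kn + 1) * n \<le> (2 * (c + 1)) * (n powr a * n)" by (simp add: algebra_simps)
    have "u \<le> ln ((2 * (c + 1)) * (n powr a * n))"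
      unfolding u_def using arg le by (subst ln_le_cancel_iff) auto
    also have "\<dots> = ln (2 * (c + 1)) + a * Ln + Ln"
      using c n0 unfolding Ln_def by (simp add: ln_mult ln_powr)
    also have "ln (2 * (c + 1)) \<le> Ln" unfolding Ln_def using c nc by (subst ln_le_cancel_iff) auto
    finally show ?thesis by (simp add: algebra_simps)
  qed
  define s where "s = sqrt n"
  have s0: "s > 0" unfolding s_def using n0 by simp
  have ss: "s * s = n" unfolding s_def using n0 by simp
  have s1: "s \<ge> 1" unfolding s_def using n3 by simp
  have part1: "tt \<le> Mb * sqrt ((a + 2) / p) * (Ln / s)"
  proof -
    have "u / q \<le> (a + 2) * Ln / (p * n)"
      using u0 q0 qpn u_le p n0 by (intro frac_le) auto
    then have "sqrt (u / q) \<le> sqrt ((a + 2) * Ln / (p * n))" by simp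
    also have "sqrt ((a + 2) * Ln / (p * n)) = sqrt ((a + 2) / p) * (sqrt Ln / s)"
    proof -
      have "(a + 2) * Ln / (p * n) = ((a + 2) / p) * (Ln / n)" using p n0 by (simp add: field_simps)
      then show ?thesis unfolding s_def by (simp add: real_sqrt_mult real_sqrt_divide)
    qed
    also have "sqrt Ln \<le> Ln"
    proof -
      have r1: "sqrt Ln \<ge> 1" using Ln1 by simp
      have "sqrt Ln * 1 \<le> sqrt Ln * sqrt Ln" using r1 by (intro mult_left_mono) auto
      also have "\<dots> = Ln" using Ln1 by simp
      finally show ?thesis by simp
    qed
    then have "sqrt ((a + 2) / p) * (sqrt Ln / s) \<le> sqrt ((a + 2) / p) * (Ln / s)"
      using s0 a p by (intro mult_left_mono divide_right_mono) auto
    finally have "sqrt (u / q) \<le> sqrt ((a + 2) / p) * (Ln / s)" .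
    then have "Mb * sqrt (u / q) \<le> Mb * (sqrt ((a + 2) / p) * (Ln / s))"
      using Mb by (intro mult_left_mono) auto
    then show ?thesis unfolding tt_def by (simp only: mult.assoc)
  qed
  have part3: "Mb / n \<le> Mb * (Ln / s)"
  proof -
    have "1 / n \<le> Ln / s"
    proof -
      have "s \<le> s * s" using s1 by (metis mult_le_cancel_left1 s0 less_le_not_le)
      then have "1 / (s * s) \<le> 1 / s" using s0 by (intro divide_left_mono) auto
      also have "1 / s \<le> Ln / s" using s0 Ln1 by (intro divide_right_mono) auto
      finally show ?thesis using ss by simp
    qed
    then show ?thesis using Mb by (simp add: divide_inverse mult_left_mono) 
  qed
  have "2 * (tt + Mb * Kn * (2 * exp (-2 * (p * n - 1) * tt\<^sup>2 / Mb\<^sup>2)))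
        \<le> (2 * Mb * sqrt ((a + 2) / p) + 2 * Mb) * (Ln / s)"
  proof -
    have eqr: "(2 * Mb * sqrt ((a + 2) / p) + 2 * Mb) * (Ln / s) = 2 * (Mb * sqrt ((a + 2) / p) * (Ln / s)) + 2 * (Mb * (Ln / s))"
      by (simp add: algebra_simps)
    show ?thesis unfolding eqr by (rule lin_aux[OF part1 part2 part3])
  qed
  then show ?thesis unfolding tt_def u_def q_def Ln_def s_def .
qed

lemma rate:
  fixes K :: "nat \<Rightarrow> nat" and a p Mb :: real
  assumes a: "a > 0" and p: "p > 0" and Mb: "Mb > 0"
    and K_growth: "(\<lambda>n. real (K n)) \<in> O(\<lambda>n. real n powr a)"
  shows "(\<lambda>n::nat. if p * real n \<ge> 2 then 2 * (Mb * sqrt (ln (2 * (real (K n) + 1) * real n) / (2 * (p * real n - 1)))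
           + Mb * real (K n) * (2 * exp (-2 * (p * real n - 1) * (Mb * sqrt (ln (2 * (real (K n) + 1) * real n) / (2 * (p * real n - 1))))\<^sup>2 / Mb\<^sup>2)))
          else Mb) \<in> O(\<lambda>n. ln (real n) / sqrt (real n))"
proof -
  from K_growth obtain c where c: "c > 0"
    and ev: "eventually (\<lambda>n. norm (real (K n)) \<le> c * norm (real n powr a)) at_top"
    by (elim landau_o.bigE)
  have ge: "eventually (\<lambda>n::nat. Z \<le> real n) at_top" for Z
    using filterlim_real_sequentially unfolding filterlim_at_top by blast
  have evall: "eventually (\<lambda>n::nat. norm (real (K n)) \<le> c * norm (real n powr a) \<and> 2 / p \<le> real n \<and> 3 \<le> real n \<and> 2 * (c + 1) \<le> real n) at_top"
    by (intro eventually_conj ev ge)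
  show ?thesis
  proof (rule bigoI[where c="2 * Mb * sqrt ((a + 2) / p) + 2 * Mb"])
    show "eventually (\<lambda>n::nat. norm (if p * real n \<ge> 2 then 2 * (Mb * sqrt (ln (2 * (real (K n) + 1) * real n) / (2 * (p * real n - 1)))
           + Mb * real (K n) * (2 * exp (-2 * (p * real n - 1) * (Mb * sqrt (ln (2 * (real (K n) + 1) * real n) / (2 * (p * real n - 1))))\<^sup>2 / Mb\<^sup>2)))
          else Mb) \<le> (2 * Mb * sqrt ((a + 2) / p) + 2 * Mb) * norm (ln (real n) / sqrt (real n))) at_top"
      using evall
    proof (rule eventually_mono)
      fix n :: nat
      assume h: "norm (real (K n)) \<le> c * norm (real n powr a) \<and> 2 / p \<le> real n \<and> 3 \<le> real n \<and> 2 * (c + 1) \<le> real n"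
      have pn: "p * real n \<ge> 2" using h p by (simp add: field_simps)
      have Kc: "real (K n) \<le> c * real n powr a" using h by simp
      have n3: "3 \<le> real n" using h by simp
      have nc: "2 * (c + 1) \<le> real n" using h by simp
      have lnpos: "0 \<le> ln (real n) / sqrt (real n)" using n3 by simp
      define X where "X = 2 * (Mb * sqrt (ln (2 * (real (K n) + 1) * real n) / (2 * (p * real n - 1)))
           + Mb * real (K n) * (2 * exp (-2 * (p * real n - 1) * (Mb * sqrt (ln (2 * (real (K n) + 1) * real n) / (2 * (p * real n - 1))))\<^sup>2 / Mb\<^sup>2)))"
      have d0: "0 < 2 * (p * real n - 1)" using pn by (smt (verit))
      have l0: "0 \<le> ln (2 * (real (K n) + 1) * real n)" using n3 by (intro ln_ge_zero) (smt (verit) mult_le_cancel_right1 of_nat_0_le_iff)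
      have q0: "0 \<le> ln (2 * (real (K n) + 1) * real n) / (2 * (p * real n - 1))" using d0 l0 by simp
      have X0: "X \<ge> 0" unfolding X_def using Mb q0 by (intro mult_nonneg_nonneg add_nonneg_nonneg) auto
      have "X \<le> (2 * Mb * sqrt ((a + 2) / p) + 2 * Mb) * (ln (real n) / sqrt (real n))"
        unfolding X_def by (rule rate_pointwise[OF a p Mb c pn n3 nc _ Kc]) simp
      then show "norm (if p * real n \<ge> 2 then 2 * (Mb * sqrt (ln (2 * (real (K n) + 1) * real n) / (2 * (p * real n - 1)))
           + Mb * real (K n) * (2 * exp (-2 * (p * real n - 1) * (Mb * sqrt (ln (2 * (real (K n) + 1) * real n) / (2 * (p * real n - 1))))\<^sup>2 / Mb\<^sup>2)))
          else Mb) \<le> (2 * Mb * sqrt ((a + 2) / p) + 2 * Mb) * norm (ln (real n) / sqrt (real n))"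
        using pn X0 lnpos n3 unfolding X_def[symmetric] by simp
    qed
  qed
qed

theorem theorem1:
  fixes XM :: "'x measure"
    and P0 :: "('x \<times> real) measure"
    and Kx :: "'x \<Rightarrow> real measure"
    and psi0 :: "'x \<Rightarrow> real"
    and \<alpha> C0 p a :: real
    and Bn :: "nat \<Rightarrow> nat set pmf"
    and K :: "nat \<Rightarrow> nat"
    and alg :: "nat \<Rightarrow> nat \<Rightarrow> ('x \<times> real) multiset \<Rightarrow> 'x \<Rightarrow> real"
  assumes alpha: "0 < \<alpha>" "\<alpha> < 1"
    and P0: "prob_space P0" "sets P0 = sets (XM \<Otimes>\<^sub>M borel)"
    and Kx_kernel: "Kx \<in> XM \<rightarrow>\<^sub>M prob_algebra borel"
    and Kx_disint: "\<forall>A\<in>sets XM. \<forall>B\<in>sets borel.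
        emeasure P0 (A \<times> B) = (\<integral>\<^sup>+x. indicator A x * emeasure (Kx x) B \<partial>(distr P0 XM fst))"
    and psi0_meas: "psi0 \<in> borel_measurable XM"
    and quantile_unique: "AE x in distr P0 XM fst. quantile_set \<alpha> (Kx x) = {psi0 x}"
    and Y_bounded: "AE z in P0. \<bar>snd z\<bar> \<le> C0"
    and p: "0 < p" "p < 1"
    and Bn: "\<forall>n. \<forall>S\<in>set_pmf (Bn n). S \<subseteq> {..<n} \<and> \<bar>real (card S) - p * real n\<bar> \<le> 1"
    and a: "a > 0"
    and K_growth: "(\<lambda>n. real (K n)) \<in> O(\<lambda>n. real n powr a)"
    and alg_bounded: "\<forall>n k D x. k \<in> {1..K n} \<longrightarrow> \<bar>alg n k D x\<bar> \<le> C0"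
    and alg_meas: "\<forall>n k (S::nat set). k \<in> {1..K n} \<longrightarrow> finite S \<longrightarrow>
        (\<lambda>(d, x). alg n k (image_mset d (mset_set S)) x)
          \<in> borel_measurable (PiM S (\<lambda>_. P0) \<Otimes>\<^sub>M XM)"
  shows "\<exists>r. r \<in> O(\<lambda>n. ln (real n) / sqrt (real n)) \<and>
    (\<forall>n \<kappa>h \<kappa>t.
       \<kappa>h \<in> measurable (PiM {..<n} (\<lambda>_. P0)) (count_space UNIV) \<longrightarrow>
       \<kappa>t \<in> measurable (PiM {..<n} (\<lambda>_. P0)) (count_space UNIV) \<longrightarrow>
       (\<forall>d\<in>space (PiM {..<n} (\<lambda>_. P0)). \<kappa>h d \<in> {1..K n} \<and>
          (\<forall>k\<in>{1..K n}. emp_cv_risk \<alpha> (Bn n) n (alg n (\<kappa>h d)) d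
                          \<le> emp_cv_risk \<alpha> (Bn n) n (alg n k) d)) \<longrightarrow>
       (\<forall>d\<in>space (PiM {..<n} (\<lambda>_. P0)). \<kappa>t d \<in> {1..K n} \<and>
          (\<forall>k\<in>{1..K n}. oracle_cv_risk P0 \<alpha> (Bn n) n (alg n (\<kappa>t d)) d
                          \<le> oracle_cv_risk P0 \<alpha> (Bn n) n (alg n k) d)) \<longrightarrow>
       (\<integral>d. oracle_cv_risk P0 \<alpha> (Bn n) n (alg n (\<kappa>h d)) d
              - (\<integral>z. pinball \<alpha> psi0 z \<partial>P0) \<partial>PiM {..<n} (\<lambda>_. P0))
       \<le> (\<integral>d. oracle_cv_risk P0 \<alpha> (Bn n) n (alg n (\<kappa>t d)) d
              - (\<integral>z. pinball \<alpha> psi0 z \<partial>P0) \<partial>PiM {..<n} (\<lambda>_. P0)) + r n)"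
proof -
  interpret Pp: prob_space P0 by (rule P0(1))
  have C0: "C0 \<ge> 0"
  proof -
    have "AE z in P0. 0 \<le> C0" using Y_bounded by (rule eventually_mono) auto
    then show ?thesis by simp
  qed
  define Mb where "Mb = 2 * C0 + 1"
  have Mb: "Mb > 0" unfolding Mb_def using C0 by simp
  define tt where "tt n = Mb * sqrt (ln (2 * (real (K n) + 1) * real n) / (2 * (p * real n - 1)))" for n :: nat
  define r where "r n = (if p * real n \<ge> 2 then 2 * (tt n + Mb * real (K n) * (2 * exp (-2 * (p * real n - 1) * (tt n)\<^sup>2 / Mb\<^sup>2)))
          else Mb)" for n :: nat
  have rO: "r \<in> O(\<lambda>n. ln (real n) / sqrt (real n))"
    unfolding r_def[abs_def] tt_def by (rule rate[OF a p(1) Mb K_growth])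
  show ?thesis
  proof (intro exI[of _ r] conjI allI impI)
    show "r \<in> O(\<lambda>n. ln (real n) / sqrt (real n))" by (rule rO)
    fix n and kh kt :: "(nat \<Rightarrow> 'x \<times> real) \<Rightarrow> nat"
    assume khm: "kh \<in> measurable (PiM {..<n} (\<lambda>_. P0)) (count_space UNIV)"
      and ktm: "kt \<in> measurable (PiM {..<n} (\<lambda>_. P0)) (count_space UNIV)"
      and khp: "\<forall>d\<in>space (PiM {..<n} (\<lambda>_. P0)). kh d \<in> {1..K n} \<and>
          (\<forall>k\<in>{1..K n}. emp_cv_risk \<alpha> (Bn n) n (alg n (kh d)) d
                          \<le> emp_cv_risk \<alpha> (Bn n) n (alg n k) d)"
      and ktp: "\<forall>d\<in>space (PiM {..<n} (\<lambda>_. P0)). kt d \<in> {1..K n} \<and>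
          (\<forall>k\<in>{1..K n}. oracle_cv_risk P0 \<alpha> (Bn n) n (alg n (kt d)) d
                          \<le> oracle_cv_risk P0 \<alpha> (Bn n) n (alg n k) d)"
    have Bsupp: "\<forall>S\<in>set_pmf (Bn n). S \<subseteq> {..<n} \<and> \<bar>real (card S) - p * real n\<bar> \<le> 1"
      using Bn by blast
    have ab: "\<forall>k D x. k \<in> {1..K n} \<longrightarrow> \<bar>alg n k D x\<bar> \<le> C0" using alg_bounded by blast
    have am: "\<forall>k (S::nat set). k \<in> {1..K n} \<longrightarrow> finite S \<longrightarrow>
        (\<lambda>(d, x). alg n k (image_mset d (mset_set S)) x) \<in> borel_measurable (PiM S (\<lambda>_. P0) \<Otimes>\<^sub>M XM)"
      using alg_meas by blast
    note PN = per_n[OF alpha P0(1) P0(2) Y_bounded Bsupp ab am khm ktm khp ktp]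
    show "(\<integral>d. oracle_cv_risk P0 \<alpha> (Bn n) n (alg n (kh d)) d
              - (\<integral>z. pinball \<alpha> psi0 z \<partial>P0) \<partial>PiM {..<n} (\<lambda>_. P0))
       \<le> (\<integral>d. oracle_cv_risk P0 \<alpha> (Bn n) n (alg n (kt d)) d
              - (\<integral>z. pinball \<alpha> psi0 z \<partial>P0) \<partial>PiM {..<n} (\<lambda>_. P0)) + r n"
    proof (cases "p * real n \<ge> 2")
      case True
      have d0: "0 < 2 * (p * real n - 1)" using True by (smt (verit))
      have l0: "0 \<le> ln (2 * (real (K n) + 1) * real n)"
      proof (rule ln_ge_zero)
        have "real n \<ge> 1" using True p by (smt (verit) mult_le_cancel_left1 of_nat_0_le_iff)
        then show "1 \<le> 2 * (real (K n) + 1) * real n" by (smt (verit) mult_le_cancel_right1 of_nat_0_le_iff)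
      qed
      have t0: "tt n \<ge> 0" unfolding tt_def using Mb d0 l0 by simp
      show ?thesis using PN(2)[OF True t0] True unfolding r_def Mb_def by simp
    next
      case False
      then show ?thesis using PN(1) unfolding r_def Mb_def by simp
    qed
  qed
qed

end
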